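(* Let $f\colon\tilde M\to\mathbb H$ be a minimal surface with conjugate $f^*$, and let $\gamma\in\pi_1(M)$ act with $\gamma^*f=f+\tau$, $\gamma^*f^*=f^*+\tau^*$, where $\tau=(\tau_0,\tau_1,\tau_2,\tau_3)$, $\tau^*=(\tau_0^*,\tau_1^*,\tau_2^*,\tau_3^* )\in\mathbb R^4$. Let $\mu\in\mathbb C\setminus\{0,1\}$, $s=-\ln|\mu|$, $t\in\mathbb R$ with $e^{s+it}=\frac{\bar\mu-1}{\bar\mu(1-\mu)}$. Then the simple factor dressing $f^\mu$ with parameter $\mu$ satisfies $\gamma^*f^\mu=f^\mu+\tau^\mu$ with $$\tau^\mu=\begin{pmatrix}\tau_0\\ \tau_1\\ \cos t\,(\tau_2\cosh s-\tau_3^*\sinh s)-\sin t\,(\tau_3\cosh s+\tau_2^*\sinh s)\\ \sin t\,(\tau_2\cosh s-\tau_3^*\sinh s)+\cos t\,(\tau_3\cosh s+\tau_2^*\sinh s)\end{pmatrix}.$$ In particular $\gamma^*f^\mu=f^\mu$ if and only if $\tau_0=\tau_1=0$ and $(\tau_2,\tau_3)=(\tau_3^*,-\tau_2^* )\tanh s$.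
   Context: Quaternions $\mathbb H=\mathbb R^4$ with basis $1,i,j,k$, $\mathbb C=\operatorname{span}_{\mathbb R}\{1,i\}$. Conjugate surface: $df^*=-*df$. Simple factor dressing with parameter $\mu$: with $a=\frac{\mu+\mu^{-1}}2$, $b=i\frac{\mu^{-1}-\mu}2$, $f^\mu=-f\frac{a-1}2+f^*\frac b2-\frac{b}{a-1}\big(f\frac b2+f^*\frac{a-1}2\big)$. *)

theory Defs
  imports "HOL-Analysis.Analysis"
begin

text \<open>Quaternions H = R^4 with basis 1, i, j, k; components of x are
  x$1 (real part), x$2 (i), x$3 (j), x$4 (k).\<close>

type_synonym quat = "real ^ 4"

definition quat :: "real \<Rightarrow> real \<Rightarrow> real \<Rightarrow> real \<Rightarrow> quat" where
  "quat a b c d = vector [a, b, c, d]"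

definition qmult :: "quat \<Rightarrow> quat \<Rightarrow> quat" (infixl "\<cdot>\<^sub>H" 70) where
  "p \<cdot>\<^sub>H q = quat
     (p$1*q$1 - p$2*q$2 - p$3*q$3 - p$4*q$4)
     (p$1*q$2 + p$2*q$1 + p$3*q$4 - p$4*q$3)
     (p$1*q$3 - p$2*q$4 + p$3*q$1 + p$4*q$2)
     (p$1*q$4 + p$2*q$3 - p$3*q$2 + p$4*q$1)"

definition cq :: "complex \<Rightarrow> quat" where
  "cq z = quat (Re z) (Im z) 0 0"

definition sfd_a :: "complex \<Rightarrow> complex" where "sfd_a \<mu> = (\<mu> + inverse \<mu>) / 2"
definition sfd_b :: "complex \<Rightarrow> complex" where "sfd_b \<mu> = \<i> * (inverse \<mu> - \<mu>) / 2"

definition simple_factor_dressing ::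
  "complex \<Rightarrow> ('a \<Rightarrow> quat) \<Rightarrow> ('a \<Rightarrow> quat) \<Rightarrow> 'a \<Rightarrow> quat" where
  "simple_factor_dressing \<mu> f fs p =
     (let a = sfd_a \<mu>; b = sfd_b \<mu> in
        - (f p \<cdot>\<^sub>H cq ((a - 1) / 2)) + fs p \<cdot>\<^sub>H cq (b / 2)
        - cq (b / (a - 1)) \<cdot>\<^sub>H (f p \<cdot>\<^sub>H cq (b / 2) + fs p \<cdot>\<^sub>H cq ((a - 1) / 2)))"

text \<open>Partial derivatives w.r.t. x and y, where z = x + i y is a conformal
  coordinate on the universal cover (modelled as a domain U in C).\<close>
definition px :: "(complex \<Rightarrow> quat) \<Rightarrow> complex \<Rightarrow> quat" where
  "px f z = frechet_derivative f (at z) 1"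
definition py :: "(complex \<Rightarrow> quat) \<Rightarrow> complex \<Rightarrow> quat" where
  "py f z = frechet_derivative f (at z) \<i>"

definition conformal_immersion :: "complex set \<Rightarrow> (complex \<Rightarrow> quat) \<Rightarrow> bool" where
  "conformal_immersion U f \<longleftrightarrow> (\<forall>z\<in>U. f differentiable (at z) \<and>
      px f z \<noteq> 0 \<and> norm (px f z) = norm (py f z) \<and> px f z \<bullet> py f z = 0)"

definition harmonic_on :: "complex set \<Rightarrow> (complex \<Rightarrow> quat) \<Rightarrow> bool" where
  "harmonic_on U f \<longleftrightarrow> (\<forall>z\<in>U. f differentiable (at z) \<and>
      px f differentiable (at z) \<and> py f differentiable (at z) \<and>
      px (px f) z + py (py f) z = 0)"

definition minimal_surface :: "complex set \<Rightarrow> (complex \<Rightarrow> quat) \<Rightarrow> bool" where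
  "minimal_surface U f \<longleftrightarrow> conformal_immersion U f \<and> harmonic_on U f"

text \<open>Conjugate surface: d fs = - * df, with *dx = dy, *dy = -dx, i.e.
  fs_x = f_y and fs_y = - f_x.\<close>
definition conjugate_surface :: "complex set \<Rightarrow> (complex \<Rightarrow> quat) \<Rightarrow> (complex \<Rightarrow> quat) \<Rightarrow> bool" where
  "conjugate_surface U f fs \<longleftrightarrow> (\<forall>z\<in>U. fs differentiable (at z) \<and>
      px fs z = py f z \<and> py fs z = - px f z)"

end

theory Submission imports Defs begin

lemma quat_nth[simp]: "quat a b c d $ 1 = a" "quat a b c d $ 2 = b" "quat a b c d $ 3 = c" "quat a b c d $ 4 = d"
  by (simp_all add: quat_def vector_def)

definition z1 :: "quat \<Rightarrow> complex" where "z1 q = Complex (q$1) (q$2)"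
definition z2 :: "quat \<Rightarrow> complex" where "z2 q = Complex (q$3) (q$4)"

lemma quat_eq_z: "p = q \<longleftrightarrow> z1 p = z1 q \<and> z2 p = z2 q"
  by (auto simp: z1_def z2_def vec_eq_iff forall_4 complex_eq_iff)

lemma z_add[simp]: "z1 (p + q) = z1 p + z1 q" "z2 (p + q) = z2 p + z2 q"
  by (simp_all add: z1_def z2_def complex_eq_iff)
lemma z_diff[simp]: "z1 (p - q) = z1 p - z1 q" "z2 (p - q) = z2 p - z2 q"
  by (simp_all add: z1_def z2_def complex_eq_iff)
lemma z_neg[simp]: "z1 (- q) = - z1 q" "z2 (- q) = - z2 q"
  by (simp_all add: z1_def z2_def complex_eq_iff)
lemma z_mult_cq[simp]: "z1 (p \<cdot>\<^sub>H cq c) = z1 p * c" "z2 (p \<cdot>\<^sub>H cq c) = z2 p * cnj c"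
  by (simp_all add: z1_def z2_def complex_eq_iff qmult_def cq_def algebra_simps)
lemma z_cq_mult[simp]: "z1 (cq c \<cdot>\<^sub>H p) = c * z1 p" "z2 (cq c \<cdot>\<^sub>H p) = c * z2 p"
  by (simp_all add: z1_def z2_def complex_eq_iff qmult_def cq_def algebra_simps)
lemma z_quat[simp]: "z1 (quat a b c d) = Complex a b" "z2 (quat a b c d) = Complex c d"
  by (simp_all add: z1_def z2_def)

lemma c3_eq:
  fixes m :: complex assumes "m \<noteq> 0" "m \<noteq> 1"
  shows "(\<i> * (inverse m - m) / 2) / ((m + inverse m)/2 - 1) = - \<i> * (m+1)/(m-1)"
proof -
  have m1: "m - 1 \<noteq> 0" using assms by simp
  have a: "(m + inverse m)/2 - 1 = (m-1)^2/(2*m)" using assms by (simp add: field_simps power2_eq_square)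
  have b: "\<i> * (inverse m - m) / 2 = - \<i> * (m-1)*(m+1)/(2*m)" using assms by (simp add: field_simps)
  show ?thesis unfolding a b using assms m1 by (simp add: field_simps; simp add: algebra_simps power2_eq_square)
qed

lemma alg:
  fixes m n :: complex
  assumes "m \<noteq> 0" "m \<noteq> 1" "n \<noteq> 0" "n \<noteq> 1"
  shows "- (((m + inverse m)/2 - 1)/2) - (- \<i> * (m+1)/(m-1)) * ((\<i> * (inverse m - m) / 2)/2) = 1"
    "((\<i> * (inverse m - m) / 2)/2) - (- \<i> * (m+1)/(m-1)) * (((m + inverse m)/2 - 1)/2) = 0"
    "- (((n + inverse n)/2 - 1)/2) - (- \<i> * (m+1)/(m-1)) * ((- \<i> * (inverse n - n) / 2)/2) = (n - 1) / (n * (1 - m)) * (1 + m*n)/2"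
    "((- \<i> * (inverse n - n) / 2)/2) - (- \<i> * (m+1)/(m-1)) * (((n + inverse n)/2 - 1)/2) = \<i> * ((n - 1) / (n * (1 - m))) * (1 - m*n)/2"
proof -
  have m1: "m - 1 \<noteq> 0" "1 - m \<noteq> 0" using assms by auto
  show "- (((m + inverse m)/2 - 1)/2) - (- \<i> * (m+1)/(m-1)) * ((\<i> * (inverse m - m) / 2)/2) = 1"
    using assms m1 by (simp add: field_simps; simp add: algebra_simps power2_eq_square)
  show "((\<i> * (inverse m - m) / 2)/2) - (- \<i> * (m+1)/(m-1)) * (((m + inverse m)/2 - 1)/2) = 0"
    using assms m1 by (simp add: field_simps; simp add: algebra_simps power2_eq_square)
  show "- (((n + inverse n)/2 - 1)/2) - (- \<i> * (m+1)/(m-1)) * ((- \<i> * (inverse n - n) / 2)/2) = (n - 1) / (n * (1 - m)) * (1 + m*n)/2"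
    using assms m1 by (simp add: field_simps; simp add: algebra_simps power2_eq_square)
  show "((- \<i> * (inverse n - n) / 2)/2) - (- \<i> * (m+1)/(m-1)) * (((n + inverse n)/2 - 1)/2) = \<i> * ((n - 1) / (n * (1 - m))) * (1 - m*n)/2"
    using assms m1 by (simp add: field_simps; simp add: algebra_simps power2_eq_square)
qed

theorem mainTheorem15:
  fixes U :: "complex set" and f fs :: "complex \<Rightarrow> quat" and \<gamma> :: "complex \<Rightarrow> complex"
    and \<tau> \<tau>s :: quat and \<mu> :: complex and s t :: real
  assumes U: "open U" "connected U" "simply_connected U" "U \<noteq> {}"
    and minimal: "minimal_surface U f"
    and conj: "conjugate_surface U f fs"
    and deck: "\<gamma> holomorphic_on U" "bij_betw \<gamma> U U"
    and per: "\<forall>z\<in>U. f (\<gamma> z) = f z + \<tau>" "\<forall>z\<in>U. fs (\<gamma> z) = fs z + \<tau>s"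
    and mu: "\<mu> \<noteq> 0" "\<mu> \<noteq> 1"
    and s_def: "s = - ln (cmod \<mu>)"
    and t_def: "exp (complex_of_real s + \<i> * complex_of_real t) = (cnj \<mu> - 1) / (cnj \<mu> * (1 - \<mu>))"
  shows "(\<forall>z\<in>U. simple_factor_dressing \<mu> f fs (\<gamma> z) = simple_factor_dressing \<mu> f fs z +
            quat (\<tau>$1) (\<tau>$2)
              (cos t * (\<tau>$3 * cosh s - \<tau>s$4 * sinh s) - sin t * (\<tau>$4 * cosh s + \<tau>s$3 * sinh s))
              (sin t * (\<tau>$3 * cosh s - \<tau>s$4 * sinh s) + cos t * (\<tau>$4 * cosh s + \<tau>s$3 * sinh s)))
       \<and> ((\<forall>z\<in>U. simple_factor_dressing \<mu> f fs (\<gamma> z) = simple_factor_dressing \<mu> f fs z) \<longleftrightarrow>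
            (\<tau>$1 = 0 \<and> \<tau>$2 = 0 \<and> \<tau>$3 = \<tau>s$4 * tanh s \<and> \<tau>$4 = - \<tau>s$3 * tanh s))"
proof -
  define m where "m = \<mu>"
  define n where "n = cnj \<mu>"
  have n0: "n \<noteq> 0" "n \<noteq> 1" using mu unfolding n_def by (auto simp: complex_eq_iff)
  define c1 where "c1 = (sfd_a \<mu> - 1)/2"
  define c2 where "c2 = sfd_b \<mu> / 2"
  define c3 where "c3 = sfd_b \<mu> / (sfd_a \<mu> - 1)"
  define w where "w = (n - 1) / (n * (1 - m))"
  have c3e: "c3 = - \<i> * (m+1)/(m-1)" unfolding c3_def sfd_a_def sfd_b_def m_def using c3_eq[OF mu] by simp
  have cc1: "cnj c1 = ((n + inverse n)/2 - 1)/2" unfolding c1_def sfd_a_def n_def by simp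
  have cc2: "cnj c2 = (- \<i> * (inverse n - n) / 2)/2" unfolding c2_def sfd_b_def n_def by simp
  note A = alg[OF mu n0, folded m_def]
  have e1: "- c1 - c3 * c2 = 1" "c2 - c3 * c1 = 0"
    using A(1,2) unfolding c3e c1_def c2_def sfd_a_def sfd_b_def m_def by simp_all
  have e2: "- cnj c1 - c3 * cnj c2 = w * (1 + m*n)/2" "cnj c2 - c3 * cnj c1 = \<i> * w * (1 - m*n)/2"
    using A(3,4) unfolding c3e cc1 cc2 w_def by simp_all
  have sfd1: "z1 (simple_factor_dressing \<mu> f fs p) = - z1 (f p) * c1 + z1 (fs p) * c2 - c3 * (z1 (f p) * c2 + z1 (fs p) * c1)" for p
    by (simp add: simple_factor_dressing_def Let_def c1_def c2_def c3_def)
  have sfd2: "z2 (simple_factor_dressing \<mu> f fs p) = - z2 (f p) * cnj c1 + z2 (fs p) * cnj c2 - c3 * (z2 (f p) * cnj c2 + z2 (fs p) * cnj c1)" for p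
    by (simp add: simple_factor_dressing_def Let_def c1_def c2_def c3_def)
  define r where "r = cmod \<mu>"
  have r0: "r > 0" using mu by (simp add: r_def)
  have es: "exp s = inverse r" using r0 by (simp add: s_def r_def exp_minus)
  have ems: "exp (-s) = r" using r0 by (simp add: s_def r_def)
  have mn: "m * n = of_real (r^2)" unfolding m_def n_def r_def by (simp add: complex_norm_square[symmetric])
  define e where "e = cis t"
  have we: "w = of_real (inverse r) * e"
  proof -
    have "exp (complex_of_real s + \<i> * complex_of_real t) = of_real (exp s) * e"
      by (simp add: exp_add e_def cis_conv_exp exp_of_real)
    then show ?thesis using t_def es by (simp add: w_def m_def n_def)
  qed
  have ch: "e * of_real (cosh s) = w * (1 + m*n)/2" unfolding we mn cosh_def es ems using r0
    by (simp add: field_simps power2_eq_square)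
  have sh: "e * of_real (sinh s) = w * (1 - m*n)/2" unfolding we mn sinh_def es ems using r0
    by (simp add: field_simps power2_eq_square)
  define Q where "Q = quat (\<tau>$1) (\<tau>$2)
              (cos t * (\<tau>$3 * cosh s - \<tau>s$4 * sinh s) - sin t * (\<tau>$4 * cosh s + \<tau>s$3 * sinh s))
              (sin t * (\<tau>$3 * cosh s - \<tau>s$4 * sinh s) + cos t * (\<tau>$4 * cosh s + \<tau>s$3 * sinh s))"
  have Qz1: "z1 Q = z1 \<tau>" unfolding Q_def by (simp add: z1_def)
  have Qz2: "z2 Q = e * (of_real (cosh s) * z2 \<tau> + \<i> * of_real (sinh s) * z2 \<tau>s)"
    unfolding Q_def e_def by (simp add: z2_def complex_eq_iff cis.sel algebra_simps)
  have key: "simple_factor_dressing \<mu> f fs (\<gamma> z) = simple_factor_dressing \<mu> f fs z + Q" if z: "z \<in> U" for z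
  proof -
    have f: "z1 (f (\<gamma> z)) = z1 (f z) + z1 \<tau>" "z2 (f (\<gamma> z)) = z2 (f z) + z2 \<tau>"
      "z1 (fs (\<gamma> z)) = z1 (fs z) + z1 \<tau>s" "z2 (fs (\<gamma> z)) = z2 (fs z) + z2 \<tau>s"
      using per z by simp_all
    have "z1 (simple_factor_dressing \<mu> f fs (\<gamma> z)) - z1 (simple_factor_dressing \<mu> f fs z)
        = z1 \<tau> * (- c1 - c3 * c2) + z1 \<tau>s * (c2 - c3 * c1)"
      unfolding sfd1 f by (simp add: algebra_simps)
    also have "\<dots> = z1 Q" unfolding e1 Qz1 by simp
    finally have 1: "z1 (simple_factor_dressing \<mu> f fs (\<gamma> z)) = z1 (simple_factor_dressing \<mu> f fs z) + z1 Q"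
      by (simp add: algebra_simps)
    have "z2 (simple_factor_dressing \<mu> f fs (\<gamma> z)) - z2 (simple_factor_dressing \<mu> f fs z)
        = z2 \<tau> * (- cnj c1 - c3 * cnj c2) + z2 \<tau>s * (cnj c2 - c3 * cnj c1)"
      unfolding sfd2 f by (simp add: algebra_simps)
    also have "\<dots> = z2 \<tau> * (e * of_real (cosh s)) + \<i> * z2 \<tau>s * (e * of_real (sinh s))"
      unfolding e2 ch sh by (simp add: algebra_simps)
    also have "\<dots> = z2 Q" unfolding Qz2 by (simp add: algebra_simps)
    finally have 2: "z2 (simple_factor_dressing \<mu> f fs (\<gamma> z)) = z2 (simple_factor_dressing \<mu> f fs z) + z2 Q"
      by (simp add: algebra_simps)
    show ?thesis using 1 2 by (simp add: quat_eq_z)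
  qed
  have e0: "e \<noteq> 0" unfolding e_def by (metis cis_neq_zero)
  have chp: "cosh s > 0" by (rule cosh_real_pos)
  have "Q = 0 \<longleftrightarrow> (\<tau>$1 = 0 \<and> \<tau>$2 = 0 \<and> \<tau>$3 = \<tau>s$4 * tanh s \<and> \<tau>$4 = - \<tau>s$3 * tanh s)"
  proof -
    have "Q = 0 \<longleftrightarrow> z1 \<tau> = 0 \<and> of_real (cosh s) * z2 \<tau> + \<i> * of_real (sinh s) * z2 \<tau>s = 0"
    proof -
      have "Q = 0 \<longleftrightarrow> z1 Q = 0 \<and> z2 Q = 0" by (simp add: quat_eq_z z1_def z2_def complex_eq_iff)
      then show ?thesis unfolding Qz1 Qz2 using e0 by simp
    qed
    also have "\<dots> \<longleftrightarrow> (\<tau>$1 = 0 \<and> \<tau>$2 = 0 \<and> \<tau>$3 = \<tau>s$4 * tanh s \<and> \<tau>$4 = - \<tau>s$3 * tanh s)"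
      using chp by (auto simp: z1_def z2_def complex_eq_iff tanh_def field_simps)
    finally show ?thesis .
  qed
  moreover have "(\<forall>z\<in>U. simple_factor_dressing \<mu> f fs (\<gamma> z) = simple_factor_dressing \<mu> f fs z) \<longleftrightarrow> Q = 0"
    using key U(4) by auto
  ultimately show ?thesis using key unfolding Q_def by simp
qed

end
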